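(* Given an integer $l\ge0$, there exists a constant $c>0$ such that for all integers $n\le cN$ and all $k\ge1$, $$\int_{kT/2}^\infty dx\,(\psi_n(x))^2x^l=(\nu_1(N))^k,$$ where $T=\sqrt{2\pi N}$.
   Context: $\psi_n(x)=(2^nn!\sqrt\pi)^{-1/2}e^{-x^2/2}H_n(x)$ is the $n$-th Hermite function ($H_n$ the physicists' Hermite polynomial). $N\ge4$ is an integer (the dimension of the discrete system), and statements are asymptotic in $N$. $\nu_1(N)$ denotes a quantity that is $\exp(-\Omega(N))$, i.e., there is a constant $\beta>0$ such that it is at most $e^{-\beta N}$ for sufficiently large $N$. *)

theory Defs
  imports "HOL-Analysis.Analysis"
begin

fun hermite_H :: "nat \<Rightarrow> real \<Rightarrow> real" where
  "hermite_H 0 x = 1"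
| "hermite_H (Suc 0) x = 2 * x"
| "hermite_H (Suc (Suc n)) x = 2 * x * hermite_H (Suc n) x - 2 * real (Suc n) * hermite_H n x"

definition hermite_psi :: "nat \<Rightarrow> real \<Rightarrow> real" where
  "hermite_psi n x = (2 ^ n * fact n * sqrt pi) powr (-1/2) * exp (- x\<^sup>2 / 2) * hermite_H n x"

end

theory Submission
  imports Defs
begin

lemma exp_ge_partial_sum:
  fixes x :: real assumes "x \<ge> 0" and that: "finite I"
  shows "(\<Sum>i\<in>I. x ^ i / fact i) \<le> exp x"
proof -
  have s: "(\<lambda>n. x ^ n /\<^sub>R fact n) sums exp x" by (rule exp_converges)
  have "sum (\<lambda>n. x ^ n /\<^sub>R fact n) I \<le> suminf (\<lambda>n. x ^ n /\<^sub>R fact n)"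
    using sums_summable[OF s] that assms by (intro sum_le_suminf) auto
  then show ?thesis using sums_unique[OF s] by (simp add: divide_inverse mult.commute)
qed

lemma pow_fact_le_exp:
  fixes x :: real assumes "x \<ge> 0"
  shows "x ^ n / fact n \<le> exp x"
  using exp_ge_partial_sum[OF assms, of "{n}"] by simp

lemma exp4: "36 \<le> exp (4::real)"
proof -
  have "(\<Sum>i\<in>{..<6}. (4::real) ^ i / fact i) \<le> exp 4"
    by (rule exp_ge_partial_sum) auto
  moreover have "(\<Sum>i\<in>{..<6}. (4::real) ^ i / fact i) \<ge> 36"
    by (simp add: eval_nat_numeral fact_numeral)
  ultimately show ?thesis by linarith
qed

lemma hermite_bound:
  fixes x :: real
  assumes "x \<ge> 0" "real n \<le> x^2"
  shows "j \<le> n \<Longrightarrow> \<bar>hermite_H j x\<bar> \<le> (3*x)^j"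
proof (induction j rule: less_induct)
  case (less j)
  consider "j = 0" | "j = Suc 0" | m where "j = Suc (Suc m)"
    by (metis not0_implies_Suc)
  then show ?case
  proof cases
    case 1 then show ?thesis by simp
  next
    case 2 then show ?thesis using assms by simp
  next
    case 3
    note jj = 3
    have "\<bar>hermite_H (Suc (Suc m)) x\<bar> \<le> (3*x)^Suc (Suc m)"
    proof -
      have IH1: "\<bar>hermite_H (Suc m) x\<bar> \<le> (3*x)^Suc m" using jj less.prems by (intro less.IH) auto
      have IH0: "\<bar>hermite_H m x\<bar> \<le> (3*x)^m" using jj less.prems by (intro less.IH) auto
      have jn: "2 * real (Suc m) \<le> 3 * x^2" using less.prems jj assms(2) by simp
      have p: "(3*x)^m \<ge> 0" using assms by simp
  have "\<bar>hermite_H (Suc (Suc m)) x\<bar> \<le> 2 * x * \<bar>hermite_H (Suc m) x\<bar> + 2 * real (Suc m) * \<bar>hermite_H m x\<bar>"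
  proof -
    have "\<bar>hermite_H (Suc (Suc m)) x\<bar> = \<bar>2 * x * hermite_H (Suc m) x - 2 * real (Suc m) * hermite_H m x\<bar>" by simp
    also have "\<dots> \<le> \<bar>2 * x * hermite_H (Suc m) x\<bar> + \<bar>2 * real (Suc m) * hermite_H m x\<bar>" by (rule abs_triangle_ineq4)
    also have "\<dots> = 2 * x * \<bar>hermite_H (Suc m) x\<bar> + 2 * real (Suc m) * \<bar>hermite_H m x\<bar>"
      using assms(1) by (simp add: abs_mult)
    finally show ?thesis .
  qed
  also have "\<dots> \<le> 2 * x * (3*x)^Suc m + 2 * real (Suc m) * (3*x)^m"
    using IH1 IH0 assms(1) by (intro add_mono mult_left_mono) auto
  also have "\<dots> = (3*x)^m * (6 * x^2 + 2 * real (Suc m))"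
    by (simp add: algebra_simps power2_eq_square)
  also have "\<dots> \<le> (3*x)^m * (9 * x^2)"
    using jn p by (intro mult_left_mono) auto
  also have "\<dots> = (3*x)^Suc (Suc m)" by (simp add: algebra_simps power2_eq_square)
  finally show ?thesis .
    qed
    then show ?thesis using jj by simp
  qed
qed

lemma hermite_cont2: "continuous_on UNIV (\<lambda>x. hermite_H n x) \<and> continuous_on UNIV (\<lambda>x. hermite_H (Suc n) x)"
proof (induction n)
  case 0 then show ?case by (auto intro!: continuous_intros)
next
  case (Suc n) then show ?case by (auto intro!: continuous_intros)
qed

lemma hermite_cont: "continuous_on S (\<lambda>x. hermite_H n x)"
  using hermite_cont2[of n] continuous_on_subset by blast

lemma pointwise:
  fixes x :: real
  assumes x0: "x \<ge> 0" and xN: "real N \<le> x^2" and nN: "real n \<le> real N / 32"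
  shows "(hermite_psi n x)^2 * x^l \<le> fact l * exp 1 * exp (-(x^2)/2)"
proof -
  define A where "A = 2^n * fact n * sqrt pi"
  have A0: "A > 0" unfolding A_def by simp
  have sp: "sqrt pi \<ge> 1" using pi_gt3 by simp
  have Age: "A \<ge> 2^n * fact n" unfolding A_def
    using mult_left_mono[OF sp, of "2^n * fact n"] by simp
  have sq: "(A powr (-1/2))^2 = 1/A"
    using A0 by (simp add: power2_eq_square powr_add[symmetric] powr_minus_divide)
  have e2: "(exp(- x\<^sup>2 / 2))^2 = exp(-(x^2))"
    by (simp add: power2_eq_square exp_add[symmetric])
  have psi: "(hermite_psi n x)^2 = 1/A * exp(-(x^2)) * (hermite_H n x)^2"
    unfolding hermite_psi_def A_def[symmetric] power_mult_distrib sq e2 by simp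
  have nx: "real n \<le> x^2" using nN xN by simp
  have Hb: "\<bar>hermite_H n x\<bar> \<le> (3*x)^n" using hermite_bound[OF x0 nx] by simp
  have H2: "(hermite_H n x)^2 \<le> (9*x^2)^n"
  proof -
    have "(hermite_H n x)^2 = \<bar>hermite_H n x\<bar>^2" by simp
    also have "\<dots> \<le> ((3*x)^n)^2" using Hb by (intro power_mono) auto
    also have "\<dots> = ((3*x)^2)^n" by (metis power_mult mult.commute)
    also have "(3*x)^2 = 9*x^2" by (simp add: power2_eq_square)
    finally show ?thesis .
  qed
  have "(hermite_psi n x)^2 \<le> (9*x^2)^n / (2^n * fact n) * exp(-(x^2))"
  proof -
    have "(hermite_psi n x)^2 \<le> 1/A * exp(-(x^2)) * (9*x^2)^n"
      unfolding psi using H2 A0 by (intro mult_left_mono) auto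
    also have "\<dots> \<le> 1/(2^n * fact n) * exp(-(x^2)) * (9*x^2)^n"
      using Age A0 by (intro mult_right_mono frac_le) auto
    finally show ?thesis by (simp add: mult.commute)
  qed
  also have "(9*x^2)^n / (2^n * fact n) = 36^n * ((x^2/8)^n / fact n)"
  proof -
    have "(9*x^2)^n / (2^n * fact n) = ((9*x^2)^n / 2^n) / fact n" by simp
    also have "(9*x^2)^n / 2^n = (9*x^2/2)^n" by (rule power_divide[symmetric])
    also have "9*x^2/2 = 36 * (x^2/8)" by simp
    also have "(36 * (x^2/8))^n = 36^n * (x^2/8)^n" by (rule power_mult_distrib)
    finally show ?thesis by simp
  qed
  also have "\<dots> \<le> 36^n * exp (x^2/8)"
    using pow_fact_le_exp[of "x^2/8" n] by (intro mult_left_mono) auto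
  also have "36^n \<le> exp(4::real)^n" using exp4 by (intro power_mono) auto
  hence "36^n * exp (x^2/8) \<le> exp(4::real)^n * exp (x^2/8)" by simp
  also have "exp(4::real)^n = exp (4 * real n)" by (simp add: exp_of_nat_mult[symmetric] mult.commute)
  also have "exp (4 * real n) \<le> exp (x^2/8)" using nN xN by simp
  finally have p1: "(hermite_psi n x)^2 \<le> exp(-(3/4) * x^2)"
    by (simp add: mult_right_mono exp_add[symmetric] algebra_simps)
  have xl: "x^l \<le> fact l * exp (x^2/4 + 1)"
  proof -
    have "x^l \<le> fact l * exp x" using pow_fact_le_exp[OF x0, of l] by (simp add: field_simps)
    also have "x \<le> x^2/4 + 1"
    proof -
      have a: "(x-2)^2 = x^2 - 4*x + 4" by (simp add: power2_eq_square algebra_simps)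
      have "0 \<le> (x-2)^2" by simp
      with a show ?thesis by linarith
    qed
    hence "exp x \<le> exp (x^2/4+1)" by simp
    finally show ?thesis by simp
  qed
  have "(hermite_psi n x)^2 * x^l \<le> exp(-(3/4) * x^2) * (fact l * exp (x^2/4 + 1))"
    using p1 xl x0 by (intro mult_mono) auto
  also have "\<dots> = fact l * exp 1 * exp (-(x^2)/2)"
    by (simp add: exp_add[symmetric] algebra_simps)
  finally show ?thesis .
qed

lemma tail_bound:
  fixes x x0 :: real
  assumes "0 \<le> x0" "x0 \<le> x"
  shows "exp (-(x^2)/2) \<le> exp (-(x0^2)/4) * exp 1 * exp (-1 * x)"
proof -
  have "x0^2 \<le> x^2" using assms by (intro power_mono) auto
  moreover have "x \<le> x^2/4 + 1"
  proof -
    have a: "(x-2)^2 = x^2 - 4*x + 4" by (simp add: power2_eq_square algebra_simps)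
    have "0 \<le> (x-2)^2" by simp
    with a show ?thesis by linarith
  qed
  ultimately have "-(x^2)/2 \<le> -(x0^2)/4 + 1 + (-1 * x)" by linarith
  hence "exp (-(x^2)/2) \<le> exp (-(x0^2)/4 + 1 + (-1 * x))" by simp
  also have "\<dots> = exp (-(x0^2)/4) * exp 1 * exp (-1 * x)" by (simp only: exp_add)
  finally show ?thesis .
qed

theorem lemma1:
  fixes l :: nat
  shows "\<exists>c>0. \<exists>\<beta>>0. \<exists>N0::nat. \<forall>N::nat. N \<ge> 4 \<and> N \<ge> N0 \<longrightarrow>
    (\<forall>(n::nat) (k::nat). real n \<le> c * real N \<and> k \<ge> 1 \<longrightarrow>
      (let T = sqrt (2 * pi * real N) in
        (\<lambda>x. (hermite_psi n x)\<^sup>2 * x ^ l) integrable_on {real k * T / 2..} \<and>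
        integral {real k * T / 2..} (\<lambda>x. (hermite_psi n x)\<^sup>2 * x ^ l) \<le> (exp (- \<beta> * real N)) ^ k))"
proof -
  define N0 :: nat where "N0 = nat \<lceil>8 * fact l * exp (2::real)\<rceil>"
  have main: "\<forall>N::nat. N \<ge> 4 \<and> N \<ge> N0 \<longrightarrow>
    (\<forall>(n::nat) (k::nat). real n \<le> 1/32 * real N \<and> k \<ge> 1 \<longrightarrow>
      (let T = sqrt (2 * pi * real N) in
        (\<lambda>x. (hermite_psi n x)\<^sup>2 * x ^ l) integrable_on {real k * T / 2..} \<and>
        integral {real k * T / 2..} (\<lambda>x. (hermite_psi n x)\<^sup>2 * x ^ l) \<le> (exp (- (1/4) * real N)) ^ k))"
  proof (intro allI impI)
    fix N n k :: nat
    assume NN: "N \<ge> 4 \<and> N \<ge> N0" and nk: "real n \<le> 1/32 * real N \<and> k \<ge> 1"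
    define T where "T = sqrt (2 * pi * real N)"
    define x0 where "x0 = real k * T / 2"
    have k1: "real k \<ge> 1" using nk by simp
    have nN: "real n \<le> real N / 32" using nk by simp
    have T0: "T \<ge> 0" unfolding T_def by simp
    have x00: "x0 \<ge> 0" unfolding x0_def using T0 by simp
    have T2: "T^2 = 2 * pi * real N" unfolding T_def by simp
    have x0sq: "x0^2 = (real k)^2 * pi * real N / 2"
      unfolding x0_def by (simp add: power_divide power_mult_distrib T2)
    have kk: "(real k)^2 \<ge> real k" using k1 by (simp add: power2_eq_square)
    have kN: "(real k)^2 * pi * real N \<ge> real k * 3 * real N"
    proof -
      have "real k * 3 \<le> (real k)^2 * pi" using kk pi_gt3 k1
        using mult_mono[of "real k" "(real k)^2" 3 pi] by simp
      thus ?thesis by (intro mult_right_mono) auto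
    qed
    have Nx0: "real N \<le> x0^2"
    proof -
      have "real k * 3 \<ge> 2" using k1 by simp
      hence "real k * 3 * real N \<ge> 2 * real N" by (intro mult_right_mono) auto
      thus ?thesis using kN x0sq by linarith
    qed
    have x0k: "x0^2 / 4 \<ge> 3/8 * real k * real N" using kN x0sq by (simp add: algebra_simps)
    define f where "f = (\<lambda>x. (hermite_psi n x)\<^sup>2 * x ^ l)"
    define D where "D = fact l * exp 1 * exp (-(x0^2)/4) * exp 1"
    define g where "g = (\<lambda>x::real. D * exp (-1 * x))"
    have fg: "\<bar>f x\<bar> \<le> g x" if "x \<in> {x0..}" for x
    proof -
      have x: "x \<ge> x0" using that by simp
      have xp: "x \<ge> 0" using x x00 by simp
      have "x0^2 \<le> x^2" using x x00 by (intro power_mono) auto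
      hence xN: "real N \<le> x^2" using Nx0 by simp
      have f0: "f x \<ge> 0" unfolding f_def using xp by simp
      have "f x \<le> fact l * exp 1 * exp (-(x^2)/2)" unfolding f_def by (rule pointwise[OF xp xN nN])
      also have "\<dots> \<le> fact l * exp 1 * (exp (-(x0^2)/4) * exp 1 * exp (-1 * x))"
        using tail_bound[OF x00 x] by (intro mult_left_mono) auto
      also have "\<dots> = g x" unfolding g_def D_def by (simp add: algebra_simps)
      finally show ?thesis using f0 by simp
    qed
    have ghas: "(g has_integral (D * (exp (-1 * x0) / 1))) {x0..}"
      unfolding g_def by (intro has_integral_mult_right has_integral_exp_minus_to_infinity) auto
    hence gint: "g integrable_on {x0..}" by blast
    have cont: "continuous_on {x0..} f"
      unfolding f_def hermite_psi_def by (auto intro!: continuous_intros hermite_cont)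
    have leb: "{x0..} \<in> sets lebesgue" by simp
    have fint: "f integrable_on {x0..}"
      by (rule measurable_bounded_by_integrable_imp_integrable_real[OF
            continuous_imp_measurable_on_sets_lebesgue[OF cont leb] gint fg leb])
    have "integral {x0..} f \<le> integral {x0..} g"
      using fint gint fg by (intro integral_le) (auto intro: order_trans[OF abs_ge_self])
    also have "integral {x0..} g = D * exp (-1 * x0)" using ghas by (simp add: integral_unique)
    also have "\<dots> \<le> D"
    proof -
      have "D \<ge> 0" unfolding D_def by simp
      moreover have "exp (-1 * x0) \<le> 1" using x00 by simp
      ultimately show ?thesis by (simp add: mult_left_le)
    qed
    also have "D \<le> (exp (- (1/4) * real N)) ^ k"
    proof -
      have "real N0 \<ge> 8 * fact l * exp 2" unfolding N0_def by linarith
      hence "fact l * exp 2 \<le> 1 + real N / 8" using NN by simp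
      also have "\<dots> \<le> exp (real N / 8)" by (rule exp_ge_add_one_self)
      also have "\<dots> \<le> exp (real k * real N / 8)"
        using mult_right_mono[OF k1, of "real N"] by simp
      finally have a: "fact l * exp 2 \<le> exp (real k * real N / 8)" .
      have "D = fact l * exp 2 * exp (-(x0^2)/4)" unfolding D_def
        by (simp add: exp_add[symmetric] algebra_simps)
      also have "\<dots> \<le> exp (real k * real N / 8) * exp (-(x0^2)/4)"
        using a by (intro mult_right_mono) auto
      also have "\<dots> = exp (real k * real N / 8 - x0^2/4)" by (simp add: exp_add[symmetric])
      also have "\<dots> \<le> exp (real k * (- (1/4) * real N))"
      proof -
        have "real k * real N / 8 - x0^2/4 \<le> real k * (- (1/4) * real N)" using x0k by (simp add: algebra_simps)
        thus ?thesis by simp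
      qed
      also have "\<dots> = (exp (- (1/4) * real N)) ^ k" by (rule exp_of_nat_mult)
      finally show ?thesis .
    qed
    finally have "integral {x0..} f \<le> (exp (- (1/4) * real N)) ^ k" .
    then show "let T = sqrt (2 * pi * real N) in
        (\<lambda>x. (hermite_psi n x)\<^sup>2 * x ^ l) integrable_on {real k * T / 2..} \<and>
        integral {real k * T / 2..} (\<lambda>x. (hermite_psi n x)\<^sup>2 * x ^ l) \<le> (exp (- (1/4) * real N)) ^ k"
      using fint unfolding Let_def T_def[symmetric] x0_def[symmetric] f_def by simp
  qed
  show ?thesis
    by (rule exI[of _ "1/32"], simp, rule exI[of _ "1/4"], simp, rule exI[of _ N0]) (use main in simp)
qed

end
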